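(* Let $n,r$ be positive integers with $2\leq r\leq n$. Then (a) $(\mathfrak{H}_{n,k}^{r}, \mathfrak{M}_{n,k}^{r})$ is a maximal and stable cross-intersecting pair in $\mathcal{I}_{n,k}^{r}$; and (b) if $r \leq n-1$, then $\mathcal{H}_{n,k}^r$ is a maximal and stable intersecting family in $\mathcal{I}_{n,k}^{r}$.
   Context: $\Gamma_{n,k}$ is the disjoint union of $n$ copies of $K_k$, with vertices $(i,j)$, $i\in[n]$, $j\in[k]$; $\mathcal{I}_{n,k}^r$ is the set of its independent sets of size $r$. $\mathfrak{H}_{n,k}^{r}=\{[r]\times\{1\}\}$, $\mathfrak{M}_{n,k}^{r}=\{X\in\mathcal{I}_{n,k}^r : X\cap([r]\times\{1\})\neq\emptyset\}$. For $r\le n-1$, with $H=[2,r+1]\times\{1\}$, $\mathcal{H}_{n,k}^r = \{ F \in \mathcal{I}_{n,k}^r : (1,1)\in F,\ F \cap H \neq \emptyset \} \cup \{H\}$. A pair of non-empty families is cross-intersecting if each member of the first meets each member of the second; it is maximal if not contained componentwise in a different cross-intersecting pair in $\mathcal{I}_{n,k}^r$. An intersecting family is maximal if it is not properly contained in an intersecting family in $\mathcal{I}_{n,k}^r$. For $i\in[n],s\in[2,k]$: $P_{i,s}(X)=(X\setminus\{(i,s)\})\cup\{(i,1)\}$ if $(i,s)\in X$, else $X$; $\pi_{i,s}(\mathcal{F})=\{P_{i,s}(X):X\in\mathcal{F}\}\cup\{X\in\mathcal{F}:P_{i,s}(X)\in\mathcal{F}\}$; a family is stable if $\pi_{i,s}(\mathcal{F})=\mathcal{F}$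 for all $i\in[n],s\in[2,k]$, and a pair is stable if both families are. *)

theory Defs
  imports Main
begin

type_synonym vertex = "nat \<times> nat"

text \<open>Vertices of Gamma_{n,k}: (i,j) with i in [n], j in [k]; two distinct vertices are
adjacent iff they lie in the same copy i of K_k.\<close>
definition vertices :: "nat \<Rightarrow> nat \<Rightarrow> vertex set" where
  "vertices n k = {1..n} \<times> {1..k}"

definition indep_sets :: "nat \<Rightarrow> nat \<Rightarrow> nat \<Rightarrow> vertex set set" where
  "indep_sets n k r = {X. X \<subseteq> vertices n k \<and> card X = r \<and>
      (\<forall>x\<in>X. \<forall>y\<in>X. fst x = fst y \<longrightarrow> x = y)}"

definition cross_intersecting :: "vertex set set \<Rightarrow> vertex set set \<Rightarrow> bool" where
  "cross_intersecting A B \<longleftrightarrow> A \<noteq> {} \<and> B \<noteq> {} \<and> (\<forall>X\<in>A. \<forall>Y\<in>B. X \<inter> Y \<noteq> {})"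

definition maximal_cross_intersecting ::
  "nat \<Rightarrow> nat \<Rightarrow> nat \<Rightarrow> vertex set set \<Rightarrow> vertex set set \<Rightarrow> bool" where
  "maximal_cross_intersecting n k r A B \<longleftrightarrow>
     A \<subseteq> indep_sets n k r \<and> B \<subseteq> indep_sets n k r \<and> cross_intersecting A B \<and>
     (\<forall>A' B'. A' \<subseteq> indep_sets n k r \<and> B' \<subseteq> indep_sets n k r \<and>
        cross_intersecting A' B' \<and> A \<subseteq> A' \<and> B \<subseteq> B' \<longrightarrow> A' = A \<and> B' = B)"

definition intersecting :: "vertex set set \<Rightarrow> bool" where
  "intersecting F \<longleftrightarrow> (\<forall>X\<in>F. \<forall>Y\<in>F. X \<inter> Y \<noteq> {})"

definition maximal_intersecting :: "nat \<Rightarrow> nat \<Rightarrow> nat \<Rightarrow> vertex set set \<Rightarrow> bool" where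
  "maximal_intersecting n k r F \<longleftrightarrow>
     F \<subseteq> indep_sets n k r \<and> intersecting F \<and>
     (\<forall>G. G \<subseteq> indep_sets n k r \<and> intersecting G \<and> F \<subseteq> G \<longrightarrow> G = F)"

definition shiftP :: "nat \<Rightarrow> nat \<Rightarrow> vertex set \<Rightarrow> vertex set" where
  "shiftP i s X = (if (i, s) \<in> X then (X - {(i, s)}) \<union> {(i, 1)} else X)"

definition shift_family :: "nat \<Rightarrow> nat \<Rightarrow> vertex set set \<Rightarrow> vertex set set" where
  "shift_family i s F = shiftP i s ` F \<union> {X \<in> F. shiftP i s X \<in> F}"

definition stable :: "nat \<Rightarrow> nat \<Rightarrow> vertex set set \<Rightarrow> bool" where
  "stable n k F \<longleftrightarrow> (\<forall>i\<in>{1..n}. \<forall>s\<in>{2..k}. shift_family i s F = F)"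

definition frakH :: "nat \<Rightarrow> vertex set set" where
  "frakH r = {{1..r} \<times> {1}}"

definition frakM :: "nat \<Rightarrow> nat \<Rightarrow> nat \<Rightarrow> vertex set set" where
  "frakM n k r = {X \<in> indep_sets n k r. X \<inter> ({1..r} \<times> {1}) \<noteq> {}}"

definition calH :: "nat \<Rightarrow> nat \<Rightarrow> nat \<Rightarrow> vertex set set" where
  "calH n k r = {F \<in> indep_sets n k r. (1, 1) \<in> F \<and> F \<inter> ({2..r+1} \<times> {1}) \<noteq> {}}
                 \<union> {{2..r+1} \<times> {1}}"

end

theory Submission
  imports Defs
begin

lemma vfin: "finite (vertices n k)" by (simp add: vertices_def)

lemma extend:
  assumes X: "X \<in> indep_sets n k r" and fS: "finite S" and Sv: "S \<subseteq> vertices n k"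
    and Si: "\<forall>x\<in>S. \<forall>y\<in>S. fst x = fst y \<longrightarrow> x = y" and SX: "S \<inter> X = {}"
    and cS: "card S \<le> r" and rn: "r \<le> n" and k2: "2 \<le> k"
  shows "\<exists>Y\<in>indep_sets n k r. S \<subseteq> Y \<and> Y \<inter> X = {}"
proof -
  have injS: "inj_on fst S" using Si by (auto simp: inj_on_def)
  have crows: "card (fst ` S) = card S" using card_image[OF injS] .
  have rsub: "fst ` S \<subseteq> {1..n}" using Sv by (auto simp: vertices_def)
  have "card ({1..n} - fst ` S) = n - card S"
    using card_Diff_subset[OF finite_imageI[OF fS] rsub] crows by simp
  hence "r - card S \<le> card ({1..n} - fst ` S)" using rn by simp
  then obtain R where R: "R \<subseteq> {1..n} - fst ` S" "card R = r - card S"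
    using obtain_subset_with_card_n by metis
  have fR: "finite R" using R(1) finite_subset by blast
  define c where "c j = (if (j,1) \<in> X then 2 else (1::nat))" for j
  define T where "T = (\<lambda>j. (j, c j)) ` R"
  define Y where "Y = S \<union> T"
  have Xi: "\<forall>x\<in>X. \<forall>y\<in>X. fst x = fst y \<longrightarrow> x = y" using X by (simp add: indep_sets_def)
  have cT: "card T = card R" unfolding T_def by (rule card_image) (auto simp: inj_on_def)
  have fT: "finite T" unfolding T_def using fR by simp
  have dST: "S \<inter> T = {}" using R(1) by (force simp: T_def)
  have cY: "card Y = r" unfolding Y_def using card_Un_disjoint[OF fS fT dST] cT R(2) cS by simp
  have Yv: "Y \<subseteq> vertices n k" unfolding Y_def T_def using Sv R(1) k2
    by (auto simp: vertices_def c_def)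
  have Yi: "\<forall>x\<in>Y. \<forall>y\<in>Y. fst x = fst y \<longrightarrow> x = y"
  proof (intro ballI impI)
    fix x y assume xy: "x \<in> Y" "y \<in> Y" "fst x = fst y"
    have RS: "\<And>j. j \<in> R \<Longrightarrow> j \<notin> fst ` S" using R(1) by blast
    have x: "x \<in> S \<or> (\<exists>j\<in>R. x = (j, c j))" and y: "y \<in> S \<or> (\<exists>j\<in>R. y = (j, c j))"
      using xy(1,2) by (auto simp: Y_def T_def)
    show "x = y"
    proof (cases "x \<in> S")
      case xS: True
      show ?thesis
      proof (cases "y \<in> S")
        case True thus ?thesis using xS Si xy(3) by blast
      next
        case False
        then obtain j where j: "j \<in> R" "y = (j, c j)" using y by blast
        have "j \<in> fst ` S" using xS xy(3) j(2) by force
        thus ?thesis using RS j(1) by blast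
      qed
    next
      case xS: False
      then obtain j where j: "j \<in> R" "x = (j, c j)" using x by blast
      show ?thesis
      proof (cases "y \<in> S")
        case True
        have "j \<in> fst ` S" using True xy(3) j(2) by force
        thus ?thesis using RS j(1) by blast
      next
        case False
        then obtain j' where j': "j' \<in> R" "y = (j', c j')" using y by blast
        thus ?thesis using j xy(3) by simp
      qed
    qed
  qed
  have YX: "Y \<inter> X = {}"
  proof -
    have "T \<inter> X = {}"
    proof (rule ccontr)
      assume "T \<inter> X \<noteq> {}"
      then obtain j where j: "(j, c j) \<in> X" by (auto simp: T_def)
      show False
      proof (cases "(j,1) \<in> X")
        case True
        then have "c j = 2" by (simp add: c_def)
        with j True Xi show False by force
      next
        case False
        then show False using j by (simp add: c_def)
      qed
    qed
    thus ?thesis using SX by (auto simp: Y_def)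
  qed
  have "Y \<in> indep_sets n k r" using cY Yv Yi by (simp add: indep_sets_def)
  thus ?thesis using YX by (auto simp: Y_def)
qed

lemma shift_indep:
  assumes X: "X \<in> indep_sets n k r" and i: "i \<in> {1..n}" and s: "s \<in> {2..k}"
  shows "shiftP i s X \<in> indep_sets n k r"
    and "\<And>x. x \<in> X \<Longrightarrow> x \<noteq> (i,s) \<Longrightarrow> x \<in> shiftP i s X"
proof -
  have Xi: "\<forall>x\<in>X. \<forall>y\<in>X. fst x = fst y \<longrightarrow> x = y" and Xv: "X \<subseteq> vertices n k"
    and cX: "card X = r" using X by (auto simp: indep_sets_def)
  have fX: "finite X" using Xv vfin finite_subset by blast
  show "shiftP i s X \<in> indep_sets n k r"
  proof (cases "(i,s) \<in> X")
    case False thus ?thesis using X by (simp add: shiftP_def)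
  next
    case True
    have n1: "(i,1) \<notin> X" using True Xi s by force
    have eq: "shiftP i s X = insert (i,1) (X - {(i,s)})" using True by (auto simp: shiftP_def)
    have "card (insert (i,1) (X - {(i,s)})) = r"
      using n1 True fX cX by (simp add: card_Diff_singleton) (metis One_nat_def Suc_pred card_gt_0_iff empty_iff)
    moreover have "insert (i,1) (X - {(i,s)}) \<subseteq> vertices n k" using Xv i s by (auto simp: vertices_def)
    moreover have "\<forall>x\<in>insert (i,1) (X - {(i,s)}). \<forall>y\<in>insert (i,1) (X - {(i,s)}). fst x = fst y \<longrightarrow> x = y"
    proof (intro ballI impI)
      fix x y assume x: "x \<in> insert (i,1) (X - {(i,s)})" and y: "y \<in> insert (i,1) (X - {(i,s)})"
        and e: "fst x = fst y"
      have other: "\<And>z. z \<in> X - {(i,s)} \<Longrightarrow> fst z \<noteq> i"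
      proof
        fix z assume z: "z \<in> X - {(i,s)}" "fst z = i"
        then have "z = (i,s)" using Xi True by (metis DiffD1 fst_conv)
        thus False using z by blast
      qed
      show "x = y"
      proof (cases "x = (i,1)")
        case True
        then show ?thesis using y e other by (metis fst_conv insertE)
      next
        case False
        then have xX: "x \<in> X - {(i,s)}" using x by blast
        show ?thesis
        proof (cases "y = (i,1)")
          case True thus ?thesis using xX e other by (metis fst_conv)
        next
          case False
          then have "y \<in> X - {(i,s)}" using y by blast
          thus ?thesis using xX e Xi by blast
        qed
      qed
    qed
    ultimately show ?thesis unfolding eq indep_sets_def by blast
  qed
  show "\<And>x. x \<in> X \<Longrightarrow> x \<noteq> (i,s) \<Longrightarrow> x \<in> shiftP i s X" by (auto simp: shiftP_def)
qed

lemma stable_intro: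
  assumes "\<And>i s X. i \<in> {1..n} \<Longrightarrow> s \<in> {2..k} \<Longrightarrow> X \<in> F \<Longrightarrow> shiftP i s X \<in> F"
  shows "stable n k F"
  using assms unfolding stable_def shift_family_def by blast

lemma cardD: "card ({a..b} \<times> {1::nat}) = b + 1 - a" for a b :: nat
  by (simp add: card_cartesian_product)

lemma indep_fin: "X \<in> indep_sets n k r \<Longrightarrow> finite X \<and> card X = r \<and> X \<subseteq> vertices n k \<and>
   (\<forall>x\<in>X. \<forall>y\<in>X. fst x = fst y \<longrightarrow> x = y)"
  using vfin finite_subset by (auto simp: indep_sets_def)

lemma not_sub:
  assumes "finite X" "finite D" "card X = card D" "X \<noteq> D"
  shows "\<exists>d\<in>D. d \<notin> X"
proof (rule ccontr)
  assume "\<not> ?thesis"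
  hence "D \<subseteq> X" by blast
  thus False using assms card_subset_eq[of X D] by simp
qed

lemma partA:
  assumes r2: "2 \<le> r" and rn: "r \<le> n" and k2: "2 \<le> k"
  shows "maximal_cross_intersecting n k r (frakH r) (frakM n k r) \<and>
           stable n k (frakH r) \<and> stable n k (frakM n k r)"
proof -
  define D where "D = {1..r} \<times> {1::nat}"
  have Dind: "D \<in> indep_sets n k r" using rn k2
    by (auto simp: D_def indep_sets_def vertices_def cardD)
  have HM: "frakH r = {D}" "frakM n k r = {X \<in> indep_sets n k r. X \<inter> D \<noteq> {}}"
    by (simp_all add: D_def frakH_def frakM_def)
  have Dne: "D \<inter> D \<noteq> {}" using r2 by (auto simp: D_def)
  have cr: "cross_intersecting {D} (frakM n k r)"
    using Dind Dne by (auto simp: cross_intersecting_def HM)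
  have maxi: "\<forall>A' B'. A' \<subseteq> indep_sets n k r \<and> B' \<subseteq> indep_sets n k r \<and>
        cross_intersecting A' B' \<and> {D} \<subseteq> A' \<and> frakM n k r \<subseteq> B' \<longrightarrow> A' = {D} \<and> B' = frakM n k r"
  proof (intro allI impI)
    fix A' B' assume a: "A' \<subseteq> indep_sets n k r \<and> B' \<subseteq> indep_sets n k r \<and>
        cross_intersecting A' B' \<and> {D} \<subseteq> A' \<and> frakM n k r \<subseteq> B'"
    have "B' \<subseteq> frakM n k r"
    proof
      fix Y assume Y: "Y \<in> B'"
      have "D \<inter> Y \<noteq> {}" using a Y by (auto simp: cross_intersecting_def)
      thus "Y \<in> frakM n k r" using a Y by (auto simp: HM)
    qed
    hence B: "B' = frakM n k r" using a by auto
    have "A' \<subseteq> {D}"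
    proof
      fix X assume X: "X \<in> A'"
      show "X \<in> {D}"
      proof (rule ccontr)
        assume "X \<notin> {D}"
        have XI: "X \<in> indep_sets n k r" using X a by blast
        obtain d where d: "d \<in> D" "d \<notin> X"
          using not_sub[of X D] indep_fin[OF XI] indep_fin[OF Dind] \<open>X \<notin> {D}\<close> by auto
        have "d \<in> vertices n k" using d Dind by (auto simp: indep_sets_def)
        then obtain Y where Y: "Y \<in> indep_sets n k r" "{d} \<subseteq> Y" "Y \<inter> X = {}"
          using extend[OF XI, of "{d}"] d r2 rn k2 by auto
        have "Y \<in> B'" using Y d a by (auto simp: HM)
        thus False using X Y(3) a unfolding cross_intersecting_def by (metis Int_commute)
      qed
    qed
    thus "A' = {D} \<and> B' = frakM n k r" using a B by auto
  qed
  have st1: "stable n k (frakH r)"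
    by (rule stable_intro) (auto simp: HM D_def shiftP_def)
  have st2: "stable n k (frakM n k r)"
  proof (rule stable_intro)
    fix i s X assume iS: "i \<in> {1..n}" "s \<in> {2..k}" and X: "X \<in> frakM n k r"
    then obtain x where x: "x \<in> X" "x \<in> D" using HM by auto
    have "x \<noteq> (i,s)" using x iS by (auto simp: D_def)
    moreover have XI: "X \<in> indep_sets n k r" using X HM by auto
    ultimately have "x \<in> shiftP i s X" using shift_indep(2)[OF XI iS] x by blast
    then show "shiftP i s X \<in> frakM n k r" using shift_indep(1)[OF XI iS] x HM by blast
  qed
  show ?thesis using maxi cr Dind st1 st2
    by (auto simp: maximal_cross_intersecting_def HM)
qed

lemma partB:
  assumes r2: "2 \<le> r" and rn: "r \<le> n - 1" and k2: "2 \<le> k"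
  shows "maximal_intersecting n k r (calH n k r) \<and> stable n k (calH n k r)"
proof -
  define D where "D = {2..r+1} \<times> {1::nat}"
  have Dind: "D \<in> indep_sets n k r" using rn r2 k2
    by (auto simp: D_def indep_sets_def vertices_def cardD)
  have CH: "calH n k r = {F \<in> indep_sets n k r. (1, 1) \<in> F \<and> F \<inter> D \<noteq> {}} \<union> {D}"
    by (simp add: D_def calH_def)
  have Dne: "D \<inter> D \<noteq> {}" using r2 by (auto simp: D_def)
  have sub: "calH n k r \<subseteq> indep_sets n k r" using Dind CH by auto
  have int: "intersecting (calH n k r)"
    unfolding intersecting_def CH using Dne by blast
  have maxi: "\<forall>G. G \<subseteq> indep_sets n k r \<and> intersecting G \<and> calH n k r \<subseteq> G \<longrightarrow> G = calH n k r"
  proof (intro allI impI)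
    fix G assume a: "G \<subseteq> indep_sets n k r \<and> intersecting G \<and> calH n k r \<subseteq> G"
    have "G \<subseteq> calH n k r"
    proof
      fix X assume X: "X \<in> G"
      have XI: "X \<in> indep_sets n k r" using X a by blast
      have DG: "D \<in> G" using a CH by auto
      have XD: "X \<inter> D \<noteq> {}" using a X DG by (auto simp: intersecting_def)
      show "X \<in> calH n k r"
      proof (rule ccontr)
        assume nX: "X \<notin> calH n k r"
        then have n11: "(1,1) \<notin> X" using XD XI CH by auto
        have "X \<noteq> D" using nX CH by auto
        then obtain d where d: "d \<in> D" "d \<notin> X"
          using not_sub[of X D] indep_fin[OF XI] indep_fin[OF Dind] by auto
        have "d \<in> vertices n k" using d Dind by (auto simp: indep_sets_def)
        moreover have "(1,1) \<in> vertices n k" using k2 rn r2 by (auto simp: vertices_def)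
        moreover have "fst d \<noteq> 1" using d by (auto simp: D_def)
        ultimately obtain Y where Y: "Y \<in> indep_sets n k r" "{(1,1),d} \<subseteq> Y" "Y \<inter> X = {}"
        proof -
          have dd: "(1,1) \<noteq> d" using \<open>fst d \<noteq> 1\<close> by auto
          have c2: "card {(1::nat,1::nat),d} = 2" using dd by simp
          have "\<exists>Y\<in>indep_sets n k r. {(1,1),d} \<subseteq> Y \<and> Y \<inter> X = {}"
            apply (rule extend[OF XI])
            subgoal by simp
            subgoal using \<open>d \<in> vertices n k\<close> \<open>(1,1) \<in> vertices n k\<close> by simp
            subgoal using \<open>fst d \<noteq> 1\<close> by auto
            subgoal using d n11 by auto
            subgoal using c2 r2 by simp
            subgoal using rn r2 by simp
            subgoal using k2 .
            done
          thus ?thesis using that by blast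
        qed
        have "Y \<in> G" using Y d a CH by auto
        thus False using X Y a by (auto simp: intersecting_def)
      qed
    qed
    thus "G = calH n k r" using a by auto
  qed
  have st: "stable n k (calH n k r)"
  proof (rule stable_intro)
    fix i s X assume iS: "i \<in> {1..n}" "s \<in> {2..k}" and X: "X \<in> calH n k r"
    show "shiftP i s X \<in> calH n k r"
    proof (cases "X = D")
      case True thus ?thesis using iS CH by (auto simp: D_def shiftP_def)
    next
      case False
      then have XI: "X \<in> indep_sets n k r" "(1,1) \<in> X" "X \<inter> D \<noteq> {}" using X CH by auto
      then obtain x where x: "x \<in> X" "x \<in> D" by auto
      have "x \<noteq> (i,s)" "(1,1) \<noteq> (i,s)" using x iS by (auto simp: D_def)
      then have "x \<in> shiftP i s X" "(1,1) \<in> shiftP i s X"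
        using shift_indep(2)[OF XI(1) iS] x XI by blast+
      then show ?thesis using shift_indep(1)[OF XI(1) iS] x CH by blast
    qed
  qed
  show ?thesis using maxi int sub st by (simp add: maximal_intersecting_def)
qed

theorem corollary4p8:
  fixes n k r :: nat
  assumes "2 \<le> r" and "r \<le> n" and "2 \<le> k"
  shows "(maximal_cross_intersecting n k r (frakH r) (frakM n k r) \<and>
           stable n k (frakH r) \<and> stable n k (frakM n k r)) \<and>
         (r \<le> n - 1 \<longrightarrow> maximal_intersecting n k r (calH n k r) \<and> stable n k (calH n k r))"
  using partA[OF assms] partB[OF assms(1) _ assms(3)] by blast

end
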